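(* An $\omega$-automatic preorder $\preceq\subseteq\Sigma^\omega\times\Sigma^\omega$ is $\omega$-recognizable if and only if its induced equivalence relation $\sim$ (defined by $x\sim y$ iff $x\preceq y$ and $y\preceq x$) has finite index.
   Context: A relation on $\Sigma^\omega$ is $\omega$-automatic if accepted by a deterministic parity automaton over $\Sigma\times\Sigma$ reading both words synchronously. It is $\omega$-recognizable if it equals $\bigcup_{i=1}^{\ell}X_i\times Y_i$ for some $\omega$-regular languages $X_i,Y_i\subseteq\Sigma^\omega$. A preorder is a reflexive and transitive relation. *)

theory Defs
  imports Main
begin

text \<open>Infinite words over an alphabet 'a are functions nat \<Rightarrow> 'a.
  The finite alphabet is modelled by a type of class finite.\<close>

definition omega_regular :: "(nat \<Rightarrow> 'a) set \<Rightarrow> bool" where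
  "omega_regular L \<longleftrightarrow>
     (\<exists>(Q::nat set) I Delta F. finite Q \<and> I \<subseteq> Q \<and> F \<subseteq> Q \<and>
        Delta \<subseteq> Q \<times> UNIV \<times> Q \<and>
        L = {w. \<exists>r. r 0 \<in> I \<and> (\<forall>n. (r n, w n, r (Suc n)) \<in> Delta) \<and>
                    (\<exists>\<^sub>\<infinity>n. r n \<in> F)})"

primrec dpa_run :: "nat \<Rightarrow> (nat \<Rightarrow> 'b \<Rightarrow> nat) \<Rightarrow> (nat \<Rightarrow> 'b) \<Rightarrow> nat \<Rightarrow> nat" where
  "dpa_run q0 delta w 0 = q0"
| "dpa_run q0 delta w (Suc n) = delta (dpa_run q0 delta w n) (w n)"

definition dpa_accepts :: "nat \<Rightarrow> (nat \<Rightarrow> 'b \<Rightarrow> nat) \<Rightarrow> (nat \<Rightarrow> nat) \<Rightarrow> (nat \<Rightarrow> 'b) \<Rightarrow> bool" where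
  "dpa_accepts q0 delta col w \<longleftrightarrow>
     even (LEAST k. \<exists>\<^sub>\<infinity>n. col (dpa_run q0 delta w n) = k)"

definition omega_automatic :: "((nat \<Rightarrow> 'a) \<times> (nat \<Rightarrow> 'a)) set \<Rightarrow> bool" where
  "omega_automatic R \<longleftrightarrow>
     (\<exists>(Q::nat set) q0 (delta :: nat \<Rightarrow> 'a \<times> 'a \<Rightarrow> nat) col.
        finite Q \<and> q0 \<in> Q \<and> (\<forall>q\<in>Q. \<forall>c. delta q c \<in> Q) \<and>
        (\<forall>x y. (x, y) \<in> R \<longleftrightarrow> dpa_accepts q0 delta col (\<lambda>n. (x n, y n))))"

definition omega_recognizable :: "((nat \<Rightarrow> 'a) \<times> (nat \<Rightarrow> 'a)) set \<Rightarrow> bool" where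
  "omega_recognizable R \<longleftrightarrow>
     (\<exists>(l::nat) X Y. (\<forall>i\<in>{1..l}. omega_regular (X i) \<and> omega_regular (Y i)) \<and>
        R = (\<Union>i\<in>{1..l}. X i \<times> Y i))"

definition induced_equiv :: "('w \<times> 'w) set \<Rightarrow> ('w \<times> 'w) set" where
  "induced_equiv R = {(x, y). (x, y) \<in> R \<and> (y, x) \<in> R}"

end

theory Submission imports Defs "HOL-Library.Infinite_Set" "HOL-Library.FuncSet"
begin


definition pidx :: "nat \<Rightarrow> nat \<Rightarrow> nat \<Rightarrow> nat" where
  "pidx i j t = (if t < i then t else i + (t - i) mod (j - i))"

lemma pidx_lt: "i < j \<Longrightarrow> pidx i j t < j"
  unfolding pidx_def
  by (auto simp: less_diff_conv2[symmetric]) (metis add.commute diff_less_mono2 less_imp_diff_less mod_less_divisor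
      zero_less_diff less_diff_conv)

lemma pidx_0: "i < j \<Longrightarrow> pidx i j 0 = 0"
  unfolding pidx_def by auto

lemma pidx_id: "m < j \<Longrightarrow> pidx i j m = m"
  unfolding pidx_def by auto

lemma pidx_ge: "i \<le> t \<Longrightarrow> i \<le> pidx i j t"
  unfolding pidx_def by auto

lemma pidx_Suc: assumes "i < j"
  shows "pidx i j (Suc t) = (if Suc (pidx i j t) < j then Suc (pidx i j t) else i)"
proof (cases "t < i")
  case True
  then show ?thesis using assms unfolding pidx_def by auto
next
  case False
  then have e: "Suc t - i = Suc (t - i)" by auto
  have "(t - i) mod (j - i) < j - i" using assms by auto
  then have "Suc ((t - i) mod (j - i)) \<noteq> j - i \<Longrightarrow> Suc (i + (t - i) mod (j - i)) < j" by linarith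
  then show ?thesis using False assms unfolding pidx_def e
    by (auto simp: mod_Suc)
qed


lemma pidx_period: assumes "i < j" "i \<le> m"
  shows "pidx i j (m + c * (j - i)) = pidx i j m"
proof -
  have "m + c * (j - i) - i = (m - i) + c * (j - i)" using assms by auto
  then have "(m + c * (j - i) - i) mod (j - i) = (m - i) mod (j - i)" by simp
  then show ?thesis using assms unfolding pidx_def by auto
qed

lemma pump_exists:
  fixes S :: "nat \<Rightarrow> 's" assumes fin: "finite (range S)"
  shows "\<exists>i j. i < j \<and> S i = S j \<and> (\<forall>m\<ge>i. (\<exists>\<^sub>\<infinity>t. S t = S m)) \<and>
     (\<forall>s. (\<exists>\<^sub>\<infinity>t. S t = s) \<longrightarrow> s \<in> S ` {i..<j})"
proof -
  define Inf where "Inf = {s. \<exists>\<^sub>\<infinity>t. S t = s}"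
  have fI: "finite Inf" using fin unfolding Inf_def
    by (rule finite_subset[rotated]) (auto dest: INFM_EX)
  have "\<forall>s\<in>range S - Inf. MOST t. S t \<noteq> s" unfolding Inf_def by auto
  then have "MOST t. \<forall>s\<in>range S - Inf. S t \<noteq> s"
    using fin by (intro eventually_ball_finite) auto
  then have "MOST t. S t \<in> Inf" by (rule eventually_mono) auto
  then obtain n0 where n0: "\<And>t. t \<ge> n0 \<Longrightarrow> S t \<in> Inf" unfolding MOST_nat_le by auto
  have "\<forall>s\<in>Inf. \<exists>t>n0. S t = s" unfolding Inf_def INFM_nat by auto
  then obtain tf where tf: "\<And>s. s \<in> Inf \<Longrightarrow> tf s > n0 \<and> S (tf s) = s" by (metis (no_types))
  define M where "M = Max (insert n0 (tf ` Inf))"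
  have M: "\<And>s. s \<in> Inf \<Longrightarrow> tf s \<le> M" "n0 \<le> M" unfolding M_def using fI by auto
  have "S n0 \<in> Inf" using n0 by auto
  then obtain j where j: "j > M" "S j = S n0" unfolding Inf_def INFM_nat by auto
  show ?thesis
  proof (intro exI conjI allI impI)
    show "n0 < j" using M j by auto
    show "S n0 = S j" using j by auto
    fix m assume "n0 \<le> m" then show "\<exists>\<^sub>\<infinity>t. S t = S m" using n0 unfolding Inf_def by auto
  next
    fix s assume "\<exists>\<^sub>\<infinity>t. S t = s"
    then have "s \<in> Inf" unfolding Inf_def by auto
    then show "s \<in> S ` {n0..<j}" using tf[of s] M(1)[of s] j by (intro image_eqI[where x="tf s"]) auto
  qed
qed

lemma pump_inf:
  fixes S :: "nat \<Rightarrow> 's"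
  assumes ij: "i < j" and A: "\<forall>m\<ge>i. (\<exists>\<^sub>\<infinity>t. S t = S m)"
    and B: "\<forall>s. (\<exists>\<^sub>\<infinity>t. S t = s) \<longrightarrow> s \<in> S ` {i..<j}" and fin: "finite (range S)"
  shows "(\<exists>\<^sub>\<infinity>t. g (S (pidx i j t)) = k) \<longleftrightarrow> (\<exists>\<^sub>\<infinity>t. g (S t) = k)"
proof -
  have a: "\<exists>m\<in>{i..<j}. g (S m) = k" if "\<exists>\<^sub>\<infinity>t. g (S t) = k"
  proof -
    have "\<exists>\<^sub>\<infinity>t. \<exists>s\<in>range S. g s = k \<and> S t = s"
      using that by (rule INFM_mono) auto
    then obtain s where "s \<in> range S" "\<exists>\<^sub>\<infinity>t. g s = k \<and> S t = s"
      using INFM_finite_Bex_distrib[OF fin, of "\<lambda>s t. g s = k \<and> S t = s"] by blast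
    then have "g s = k" using INFM_EX by blast
    moreover have "\<exists>\<^sub>\<infinity>t. S t = s" using \<open>\<exists>\<^sub>\<infinity>t. g s = k \<and> S t = s\<close> by (rule INFM_mono) simp
    ultimately show ?thesis using B by auto
  qed
  have b: "\<exists>\<^sub>\<infinity>t. g (S t) = k" if "m\<in>{i..<j}" "g (S m) = k" for m
  proof -
    have "\<exists>\<^sub>\<infinity>t. S t = S m" using A that by auto
    then show ?thesis by (rule INFM_mono) (use that in auto)
  qed
  have c: "\<exists>m\<in>{i..<j}. g (S m) = k" if "\<exists>\<^sub>\<infinity>t. g (S (pidx i j t)) = k"
  proof -
    from that[unfolded INFM_nat_le, rule_format, of i] obtain t where "t \<ge> i" "g (S (pidx i j t)) = k" by blast
    then show ?thesis using pidx_ge[of i t j] pidx_lt[OF ij, of t] by auto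
  qed
  have d: "\<exists>\<^sub>\<infinity>t. g (S (pidx i j t)) = k" if "m\<in>{i..<j}" "g (S m) = k" for m
    unfolding INFM_nat_le
  proof
    fix n
    have "1 \<le> j - i" using ij by simp
    then have "n * 1 \<le> n * (j - i)" by (rule mult_le_mono2)
    then have "n \<le> m + n * (j - i)" by linarith
    moreover have "pidx i j (m + n * (j - i)) = m"
      using pidx_period[OF ij, of m n] pidx_id[of m j] that by auto
    ultimately show "\<exists>t\<ge>n. g (S (pidx i j t)) = k" using that
      by (intro exI[of _ "m + n * (j - i)"]) auto
  qed
  show ?thesis using a b c d by blast
qed

lemma run_pump:
  assumes ij: "i < j" and eq: "dpa_run q0 delta w i = dpa_run q0 delta w j"
  shows "dpa_run q0 delta (\<lambda>n. w (pidx i j n)) t = dpa_run q0 delta w (pidx i j t)"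
proof (induction t)
  case 0
  then show ?case using pidx_0[OF ij] by simp
next
  case (Suc t)
  have lt: "pidx i j t < j" by (rule pidx_lt[OF ij])
  show ?case
  proof (cases "Suc (pidx i j t) < j")
    case True
    then show ?thesis using Suc pidx_Suc[OF ij, of t] by simp
  next
    case False
    then have sj: "Suc (pidx i j t) = j" using lt by auto
    have "dpa_run q0 delta (\<lambda>n. w (pidx i j n)) (Suc t) = delta (dpa_run q0 delta w (pidx i j t)) (w (pidx i j t))"
      using Suc by simp
    also have "\<dots> = dpa_run q0 delta w (Suc (pidx i j t))" by simp
    also have "\<dots> = dpa_run q0 delta w i" using sj eq by simp
    also have "\<dots> = dpa_run q0 delta w (pidx i j (Suc t))" using pidx_Suc[OF ij, of t] False by simp
    finally show ?thesis .
  qed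
qed



lemma omega_regular_gen:
  fixes Q :: "'s set" and Delta :: "('s \<times> 'a \<times> 's) set"
  assumes fQ: "finite Q" and IQ: "I \<subseteq> Q" and FQ: "F \<subseteq> Q" and DQ: "Delta \<subseteq> Q \<times> UNIV \<times> Q"
    and L: "L = {w. \<exists>r. r 0 \<in> I \<and> (\<forall>n. (r n, w n, r (Suc n)) \<in> Delta) \<and> (\<exists>\<^sub>\<infinity>n. r n \<in> F)}"
  shows "omega_regular L"
proof -
  obtain f where f: "bij_betw f Q {0..<card Q}" using ex_bij_betw_finite_nat[OF fQ] by blast
  then have inj: "inj_on f Q" by (simp add: bij_betw_def)
  define DeltaX where "DeltaX = (\<lambda>(p,a,q). (f p, a, f q)) ` Delta"
  have DX: "DeltaX \<subseteq> f ` Q \<times> UNIV \<times> f ` Q" using DQ unfolding DeltaX_def by auto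
  have eq: "L = {w. \<exists>r. r 0 \<in> f ` I \<and> (\<forall>n. (r n, w n, r (Suc n)) \<in> DeltaX) \<and> (\<exists>\<^sub>\<infinity>n. r n \<in> f ` F)}"
    (is "_ = ?LX")
  proof (intro set_eqI iffI)
    fix w assume "w \<in> L"
    then obtain r where r0: "r 0 \<in> I" and tr: "\<And>n. (r n, w n, r (Suc n)) \<in> Delta"
      and inf: "\<exists>\<^sub>\<infinity>n. r n \<in> F" unfolding L by blast
    have "(f (r n), w n, f (r (Suc n))) \<in> DeltaX" for n
      using tr[of n] unfolding DeltaX_def by force
    moreover have "\<exists>\<^sub>\<infinity>n. f (r n) \<in> f ` F" using inf by (rule INFM_mono) auto
    ultimately show "w \<in> ?LX" using r0 by (intro CollectI exI[of _ "\<lambda>n. f (r n)"]) auto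
  next
    fix w assume "w \<in> ?LX"
    then obtain rr where r0: "rr 0 \<in> f ` I" and tr: "\<And>n. (rr n, w n, rr (Suc n)) \<in> DeltaX"
      and inf: "\<exists>\<^sub>\<infinity>n. rr n \<in> f ` F" by blast
    have rQ: "rr n \<in> f ` Q" for n using tr[of n] DX by auto
    define r where "r n = inv_into Q f (rr n)" for n
    have rQ2: "r n \<in> Q" and fr: "f (r n) = rr n" for n
      using rQ[of n] unfolding r_def by (auto intro: inv_into_into f_inv_into_f)
    have bk: "x \<in> Q \<Longrightarrow> f x = rr n \<Longrightarrow> x = r n" for x n
      using inj rQ2[of n] fr[of n] unfolding inj_on_def by metis
    have "(r n, w n, r (Suc n)) \<in> Delta" for n
    proof -
      obtain p q where "(p, w n, q) \<in> Delta" "f p = rr n" "f q = rr (Suc n)"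
        using tr[of n] unfolding DeltaX_def by auto
      moreover then have "p \<in> Q" "q \<in> Q" using DQ by auto
      ultimately show ?thesis using bk by metis
    qed
    moreover have "r 0 \<in> I" using r0 bk IQ by auto
    moreover have "\<exists>\<^sub>\<infinity>n. r n \<in> F" using inf by (rule INFM_mono) (use bk FQ in auto)
    ultimately show "w \<in> L" unfolding L by blast
  qed
  show ?thesis unfolding omega_regular_def
  proof (intro exI conjI)
    show "finite (f ` Q)" using fQ by simp
    show "f ` I \<subseteq> f ` Q" using IQ by auto
    show "f ` F \<subseteq> f ` Q" using FQ by auto
    show "DeltaX \<subseteq> f ` Q \<times> UNIV \<times> f ` Q" by (rule DX)
    show "L = {w. \<exists>r. r 0 \<in> f ` I \<and> (\<forall>n. (r n, w n, r (Suc n)) \<in> DeltaX) \<and> (\<exists>\<^sub>\<infinity>n. r n \<in> f ` F)}" by (rule eq)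
  qed
qed

primrec grun :: "'s \<Rightarrow> ('s \<Rightarrow> 'b \<Rightarrow> 's) \<Rightarrow> (nat \<Rightarrow> 'b) \<Rightarrow> nat \<Rightarrow> 's" where
  "grun s0 D w 0 = s0"
| "grun s0 D w (Suc n) = D (grun s0 D w n) (w n)"

lemma parity_nba:
  fixes D :: "'s \<Rightarrow> 'a \<Rightarrow> 's" and c :: "'s \<Rightarrow> nat"
  assumes fQ: "finite QD" and s0: "s0 \<in> QD" and cl: "\<And>s a. s \<in> QD \<Longrightarrow> D s a \<in> QD"
  shows "omega_regular {w. even (LEAST k. \<exists>\<^sub>\<infinity>n. c (grun s0 D w n) = k)}"
proof -
  define K where "K = c ` QD"
  define Q' :: "('s + nat \<times> 's) set" where "Q' = Inl ` QD \<union> Inr ` (K \<times> QD)"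
  define DX :: "(('s + nat \<times> 's) \<times> 'a \<times> ('s + nat \<times> 's)) set" where
    "DX = {(Inl s, a, Inl (D s a)) | s a. s \<in> QD}
       \<union> {(Inl s, a, Inr (k, D s a)) | s a k. s \<in> QD \<and> k \<in> K \<and> even k \<and> k \<le> c (D s a)}
       \<union> {(Inr (k, s), a, Inr (k, D s a)) | s a k. s \<in> QD \<and> k \<in> K \<and> even k \<and> k \<le> c (D s a)}"
  define F' :: "('s + nat \<times> 's) set" where "F' = {Inr (k, s) | k s. k \<in> K \<and> s \<in> QD \<and> c s = k}"
  have runQ: "grun s0 D w n \<in> QD" for w n by (induction n) (auto simp: s0 cl)
  have fK: "finite K" unfolding K_def using fQ by simp
  have eq: "{w. even (LEAST k. \<exists>\<^sub>\<infinity>n. c (grun s0 D w n) = k)} =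
    {w. \<exists>r. r 0 \<in> {Inl s0} \<and> (\<forall>n. (r n, w n, r (Suc n)) \<in> DX) \<and> (\<exists>\<^sub>\<infinity>n. r n \<in> F')}"
    (is "?A = ?B")
  proof (intro set_eqI iffI)
    fix w assume "w \<in> ?A"
    define g where "g n = grun s0 D w n" for n
    have ev: "even (LEAST k. \<exists>\<^sub>\<infinity>n. c (g n) = k)" using \<open>w \<in> ?A\<close> unfolding g_def by simp
    have fr: "finite (range (\<lambda>n. c (g n)))" 
      by (rule finite_subset[OF _ fK]) (auto simp: K_def g_def runQ)
    have "\<exists>\<^sub>\<infinity>n. \<exists>k\<in>range (\<lambda>n. c (g n)). c (g n) = k" unfolding INFM_nat by auto
    then obtain k0 where "\<exists>\<^sub>\<infinity>n. c (g n) = k0" using INFM_finite_Bex_distrib[OF fr, of "\<lambda>k n. c (g n) = k"] by blast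
    define k where "k = (LEAST k. \<exists>\<^sub>\<infinity>n. c (g n) = k)"
    have hk: "\<exists>\<^sub>\<infinity>n. c (g n) = k" unfolding k_def by (rule LeastI) fact
    have kmin: "\<not> (\<exists>\<^sub>\<infinity>n. c (g n) = k')" if "k' < k" for k'
      using not_less_Least[of k' "\<lambda>k. \<exists>\<^sub>\<infinity>n. c (g n) = k"] that unfolding k_def by blast
    have "MOST n. \<forall>k'\<in>{..<k}. c (g n) \<noteq> k'"
      by (rule eventually_ball_finite) (use kmin in auto)
    then obtain N where N: "\<And>n. n > N \<Longrightarrow> k \<le> c (g n)" unfolding MOST_nat
      by (metis lessThan_iff not_le)
    have kK: "k \<in> K" using INFM_EX[OF hk] by (auto simp: K_def g_def runQ)
    have evk: "even k" using ev unfolding k_def .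
    define r where "r n = (if n \<le> N then Inl (g n) else Inr (k, g n))" for n
    have "(r n, w n, r (Suc n)) \<in> DX" for n
    proof -
      have gs: "g (Suc n) = D (g n) (w n)" unfolding g_def by simp
      have gQ: "g n \<in> QD" unfolding g_def by (rule runQ)
      consider "n < N" | "n = N" | "n > N" by linarith
      then show ?thesis
      proof cases
        case 1 then show ?thesis unfolding r_def DX_def using gs gQ by auto
      next
        case 2 then show ?thesis unfolding r_def DX_def using gs gQ N[of "Suc n"] kK evk by auto
      next
        case 3 then show ?thesis unfolding r_def DX_def using gs gQ N[of "Suc n"] kK evk by auto
      qed
    qed
    moreover have "r 0 \<in> {Inl s0}" unfolding r_def g_def by simp
    moreover have "\<exists>\<^sub>\<infinity>n. r n \<in> F'" unfolding INFM_nat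
    proof
      fix m
      obtain n where "n > max m N" "c (g n) = k" using hk unfolding INFM_nat by blast
      then show "\<exists>n>m. r n \<in> F'" unfolding r_def F'_def using kK runQ g_def
        by (intro exI[of _ n]) auto
    qed
    ultimately show "w \<in> ?B" by blast
  next
    fix w assume "w \<in> ?B"
    then obtain r where r0: "r 0 = Inl s0" and tr: "\<And>n. (r n, w n, r (Suc n)) \<in> DX"
      and inf: "\<exists>\<^sub>\<infinity>n. r n \<in> F'" by blast
    define g where "g n = grun s0 D w n" for n
    define proj :: "'s + nat \<times> 's \<Rightarrow> 's" where "proj = case_sum id snd"
    have pstep: "(x, a, y) \<in> DX \<Longrightarrow> proj y = D (proj x) a" for x a y
      unfolding DX_def proj_def by auto
    have pr: "proj (r n) = g n" for n
    proof (induction n)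
      case 0 then show ?case using r0 by (simp add: proj_def g_def)
    next
      case (Suc n) then show ?case using pstep[OF tr[of n]] by (simp add: g_def)
    qed
    obtain n1 where "r n1 \<in> F'" using INFM_EX[OF inf] by blast
    then obtain k s where rn1: "r n1 = Inr (k, s)" unfolding F'_def by blast
    have istep: "(Inr (k, x), a, y) \<in> DX \<Longrightarrow> y = Inr (k, D x a) \<and> even k \<and> k \<le> c (D x a)" for x a y
      unfolding DX_def by auto
    have stay: "r (n1 + m) = Inr (k, g (n1 + m))" for m
    proof (induction m)
      case 0 then show ?case using rn1 pr[of n1] by (simp add: proj_def)
    next
      case (Suc m) then show ?case using istep[OF tr[of "n1 + m", unfolded Suc]] 
        by (simp add: g_def)
    qed
    have evk: "even k" using istep[OF tr[of n1, unfolded stay[of 0, simplified]]] by simp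
    have geq: "k \<le> c (g n)" if n1lt: "n > n1" for n
    proof -
      obtain m where n: "n = Suc (n1 + m)" using less_imp_Suc_add[OF n1lt] by blast
      show ?thesis using istep[OF tr[of "n1 + m", unfolded stay[of m]]] n by (simp add: g_def)
    qed
    have hk: "\<exists>\<^sub>\<infinity>n. c (g n) = k" unfolding INFM_nat
    proof
      fix m
      obtain n where n: "n > max m n1" "r n \<in> F'" using inf unfolding INFM_nat by blast
      then have "n = n1 + (n - n1)" by simp
      then have "r n = Inr (k, g n)" using stay[of "n - n1"] by simp
      then have "c (g n) = k" using n unfolding F'_def by auto
      then show "\<exists>n>m. c (g n) = k" using n by auto
    qed
    have "(LEAST k. \<exists>\<^sub>\<infinity>n. c (g n) = k) = k"
    proof (rule Least_equality)
      show "\<exists>\<^sub>\<infinity>n. c (g n) = k" by (rule hk)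
      fix k' assume "\<exists>\<^sub>\<infinity>n. c (g n) = k'"
      then obtain n where "n > n1" "c (g n) = k'" unfolding INFM_nat by blast
      then show "k \<le> k'" using geq by auto
    qed
    then show "w \<in> ?A" using evk unfolding g_def by simp
  qed
  show ?thesis
  proof (rule omega_regular_gen[OF _ _ _ _ eq])
    show "finite Q'" unfolding Q'_def using fQ fK by simp
    show "{Inl s0} \<subseteq> Q'" unfolding Q'_def using s0 by auto
    show "F' \<subseteq> Q'" unfolding Q'_def F'_def by auto
    show "DX \<subseteq> Q' \<times> UNIV \<times> Q'" unfolding Q'_def DX_def using cl by (auto simp: K_def)
  qed
qed



lemma dpa_runQ:
  assumes "q0 \<in> Q" "\<forall>q\<in>Q. \<forall>c. delta q c \<in> Q"
  shows "dpa_run q0 delta w t \<in> Q"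
  using assms by (induction t) auto

lemma lasso_regular:
  fixes x0 :: "nat \<Rightarrow> 'a" and h :: "'a \<Rightarrow> 'a \<Rightarrow> 'b"
  assumes ij: "i < j" and fQ: "finite Q" and q0: "q0 \<in> Q" and cl: "\<forall>q\<in>Q. \<forall>c. delta q c \<in> Q"
  shows "omega_regular {y. dpa_accepts q0 delta col (\<lambda>n. h (x0 (pidx i j n)) (y n))}"
proof -
  define D :: "nat \<times> nat \<Rightarrow> 'a \<Rightarrow> nat \<times> nat" where
    "D = (\<lambda>(q, p) a. (delta q (h (x0 p) a), if Suc p < j then Suc p else i))"
  have gr: "grun (q0, 0) D y t = (dpa_run q0 delta (\<lambda>n. h (x0 (pidx i j n)) (y n)) t, pidx i j t)" for y t
  proof (induction t)
    case 0 then show ?case using pidx_0[OF ij] by simp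
  next
    case (Suc t) then show ?case using pidx_Suc[OF ij, of t] by (simp add: D_def)
  qed
  have eq: "{y. dpa_accepts q0 delta col (\<lambda>n. h (x0 (pidx i j n)) (y n))} =
     {y. even (LEAST k. \<exists>\<^sub>\<infinity>n. (col \<circ> fst) (grun (q0, 0) D y n) = k)}"
    unfolding dpa_accepts_def gr by simp
  show ?thesis unfolding eq
  proof (rule parity_nba[where QD = "Q \<times> {..<j}"])
    show "finite (Q \<times> {..<j})" using fQ by simp
    show "(q0, 0) \<in> Q \<times> {..<j}" using q0 ij by simp
    fix s a assume "s \<in> Q \<times> {..<j}"
    then show "D s a \<in> Q \<times> {..<j}" using cl ij by (auto simp: D_def)
  qed
qed

lemma UN_reindex: "e ` A = B \<Longrightarrow> (\<Union>k\<in>A. F (e k)) = (\<Union>C\<in>B. F C)"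
  by auto

theorem proposition10:
  fixes R :: "((nat \<Rightarrow> 'a::finite) \<times> (nat \<Rightarrow> 'a)) set"
  assumes "omega_automatic R"
    and "refl R" and "trans R"
  shows "omega_recognizable R \<longleftrightarrow> finite (UNIV // induced_equiv R)"
proof -
  define E where "E = induced_equiv R"
  have Emem: "(x, y) \<in> E \<longleftrightarrow> (x, y) \<in> R \<and> (y, x) \<in> R" for x y
    unfolding E_def induced_equiv_def by simp
  have Rrefl: "(x, x) \<in> R" for x using assms(2) by (simp add: refl_on_def)
  have Rtrans: "(x, y) \<in> R \<Longrightarrow> (y, w) \<in> R \<Longrightarrow> (x, w) \<in> R" for x y w
    using assms(3) by (meson transE)
  have eqv: "equiv UNIV E"
  proof (rule equivI)
    show "E \<subseteq> UNIV \<times> UNIV" by simp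
    show "refl E" using Emem Rrefl by (auto simp: refl_on_def)
    show "sym E" using Emem by (auto intro: symI)
    show "trans E"
    proof (rule transI)
      fix x y w assume "(x, y) \<in> E" "(y, w) \<in> E"
      then show "(x, w) \<in> E" using Emem Rtrans by meson
    qed
  qed
  show ?thesis unfolding E_def[symmetric]
  proof
    assume "omega_recognizable R"
    then obtain l :: nat and X Y where RXY: "R = (\<Union>i\<in>{1..l}. X i \<times> Y i)"
      unfolding omega_recognizable_def by blast
    define phi where "phi x = ({i\<in>{1..l}. x \<in> X i}, {i\<in>{1..l}. x \<in> Y i})" for x
    have same: "(x, x') \<in> E" if "phi x = phi x'" for x x'
    proof -
      have "(x', x') \<in> R" by (rule Rrefl)
      then obtain i where i: "i \<in> {1..l}" "x' \<in> X i" "x' \<in> Y i" unfolding RXY by blast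
      then have "x \<in> X i" using that unfolding phi_def by blast
      then have 1: "(x, x') \<in> R" unfolding RXY using i by blast
      have "(x, x) \<in> R" by (rule Rrefl)
      then obtain i' where i': "i' \<in> {1..l}" "x \<in> X i'" "x \<in> Y i'" unfolding RXY by blast
      then have "x' \<in> X i'" using that unfolding phi_def by blast
      then have "(x', x) \<in> R" unfolding RXY using i' by blast
      then show ?thesis using 1 Emem by blast
    qed
    have "UNIV // E \<subseteq> (\<lambda>v. E `` {SOME x. phi x = v}) ` range phi"
    proof
      fix C assume "C \<in> UNIV // E"
      then obtain x where C: "C = E `` {x}" by (auto elim: quotientE)
      define x' where "x' = (SOME x'. phi x' = phi x)"
      have "phi x' = phi x" unfolding x'_def by (rule someI[where x=x]) (rule refl)
      then have "(x', x) \<in> E" by (rule same)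
      then have "E `` {x'} = E `` {x}" by (rule equiv_class_eq[OF eqv])
      then show "C \<in> (\<lambda>v. E `` {SOME x. phi x = v}) ` range phi"
        unfolding C x'_def by auto
    qed
    moreover have "finite (range phi)"
      by (rule finite_subset[of _ "Pow {1..l} \<times> Pow {1..l}"]) (auto simp: phi_def)
    ultimately show "finite (UNIV // E)" by (meson finite_imageI finite_subset)
  next
    assume fin: "finite (UNIV // E)"
    obtain Q q0 and delta :: "nat \<Rightarrow> 'a \<times> 'a \<Rightarrow> nat" and col where
      fQ: "finite Q" and q0: "q0 \<in> Q" and cl: "\<forall>q\<in>Q. \<forall>c. delta q c \<in> Q"
      and Rmem: "\<And>x y. (x, y) \<in> R \<longleftrightarrow> dpa_accepts q0 delta col (\<lambda>n. (x n, y n))"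
      using assms(1) unfolding omega_automatic_def by blast
    define CC where "CC = UNIV // E"
    define z where "z C = (SOME y. y \<in> C)" for C :: "(nat \<Rightarrow> 'a) set"
    have zC: "z C \<in> C" if "C \<in> CC" for C
    proof -
      have "C \<noteq> {}" using that unfolding CC_def by (rule in_quotient_imp_non_empty[OF eqv])
      then show ?thesis unfolding z_def by (simp add: some_in_eq)
    qed
    have Cz: "C = E `` {z C}" if CinC: "C \<in> CC" for C
    proof -
      obtain x where C: "C = E `` {x}" using CinC unfolding CC_def by (auto elim: quotientE)
      have "(x, z C) \<in> E" using zC[OF CinC] C by auto
      then show ?thesis unfolding C by (rule equiv_class_eq[OF eqv])
    qed
    define W where "W p = (\<lambda>n. (z (fst p) n, z (snd p) n))" for p
    define S where "S t = (\<lambda>p. if p \<in> CC \<times> CC then dpa_run q0 delta (W p) t else undefined)" for t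
    have fCC: "finite CC" using fin unfolding CC_def .
    have "range S \<subseteq> (\<Pi>\<^sub>E p \<in> CC \<times> CC. Q)"
      using dpa_runQ[OF q0 cl] by (auto simp: PiE_def Pi_def extensional_def S_def)
    then have finS: "finite (range S)"
      by (rule finite_subset) (intro finite_PiE, use fCC fQ in auto)
    obtain i j where ij: "i < j" and Sij: "S i = S j" and PA: "\<forall>m\<ge>i. (\<exists>\<^sub>\<infinity>t. S t = S m)"
      and PB: "\<forall>s. (\<exists>\<^sub>\<infinity>t. S t = s) \<longrightarrow> s \<in> S ` {i..<j}"
      using pump_exists[OF finS] by blast
    define x where "x C = (\<lambda>n. z C (pidx i j n))" for C
    have key: "(x C, x D) \<in> R \<longleftrightarrow> (z C, z D) \<in> R" if CD: "C \<in> CC" "D \<in> CC" for C D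
    proof -
      have SCD: "S t (C, D) = dpa_run q0 delta (W (C, D)) t" for t using CD by (simp add: S_def)
      have runeq: "dpa_run q0 delta (W (C, D)) i = dpa_run q0 delta (W (C, D)) j"
        using fun_cong[OF Sij, of "(C, D)"] SCD by simp
      have xw: "(\<lambda>n. (x C n, x D n)) = (\<lambda>n. W (C, D) (pidx i j n))" by (simp add: x_def W_def)
      have r': "dpa_run q0 delta (\<lambda>n. (x C n, x D n)) t = S (pidx i j t) (C, D)" for t
        unfolding xw run_pump[OF ij runeq] SCD ..
      have zw: "(\<lambda>n. (z C n, z D n)) = W (C, D)" by (simp add: W_def)
      have "(\<exists>\<^sub>\<infinity>n. col (dpa_run q0 delta (\<lambda>n. (x C n, x D n)) n) = k) \<longleftrightarrow>
            (\<exists>\<^sub>\<infinity>n. col (dpa_run q0 delta (\<lambda>n. (z C n, z D n)) n) = k)" for k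
        unfolding r' zw SCD[symmetric]
        using pump_inf[OF ij PA PB finS, of "\<lambda>s. col (s (C, D))" k] by simp
      then show ?thesis unfolding Rmem dpa_accepts_def by simp
    qed
    have injx: "inj_on (\<lambda>C. E `` {x C}) CC"
    proof (rule inj_onI)
      fix C D assume CD: "C \<in> CC" "D \<in> CC" and eq: "E `` {x C} = E `` {x D}"
      then have "(x C, x D) \<in> E" using eq_equiv_class_iff[OF eqv] by blast
      then have "(z C, z D) \<in> E" using key[OF CD] key[OF CD(2) CD(1)] Emem by blast
      then have "E `` {z C} = E `` {z D}" by (rule equiv_class_eq[OF eqv])
      then show "C = D" using Cz CD by metis
    qed
    have subx: "(\<lambda>C. E `` {x C}) ` CC \<subseteq> CC" unfolding CC_def by (auto intro: quotientI)
    have surjx: "(\<lambda>C. E `` {x C}) ` CC = CC" by (rule endo_inj_surj[OF fCC subx injx])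
    have cover: "\<exists>C\<in>CC. (y, x C) \<in> E" for y
    proof -
      have "E `` {y} \<in> CC" unfolding CC_def by (rule quotientI) simp
      then have "E `` {y} \<in> (\<lambda>C. E `` {x C}) ` CC" using surjx by simp
      then obtain C where "C \<in> CC" "E `` {y} = E `` {x C}" by (rule imageE) simp
      then show ?thesis using eq_equiv_class_iff[OF eqv, of y "x C"] by auto
    qed
    have Req: "R = (\<Union>C\<in>CC. {y. (y, x C) \<in> R} \<times> {w. (x C, w) \<in> R})"
    proof (intro set_eqI iffI)
      fix p assume "p \<in> R"
      obtain y w where p: "p = (y, w)" by (cases p)
      obtain C where "C \<in> CC" "(y, x C) \<in> E" using cover by blast
      then show "p \<in> (\<Union>C\<in>CC. {y. (y, x C) \<in> R} \<times> {w. (x C, w) \<in> R})"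
        using \<open>p \<in> R\<close> p Emem Rtrans by blast
    next
      fix p assume "p \<in> (\<Union>C\<in>CC. {y. (y, x C) \<in> R} \<times> {w. (x C, w) \<in> R})"
      then show "p \<in> R" using Rtrans by blast
    qed
    have regX: "omega_regular {y. (y, x C) \<in> R}" for C
    proof -
      have "{y. (y, x C) \<in> R} =
        {y. dpa_accepts q0 delta col (\<lambda>n. (\<lambda>a b. (b, a)) (z C (pidx i j n)) (y n))}"
        unfolding Rmem x_def by simp
      then show ?thesis using lasso_regular[OF ij fQ q0 cl] by simp
    qed
    have regY: "omega_regular {w. (x C, w) \<in> R}" for C
    proof -
      have "{w. (x C, w) \<in> R} =
        {w. dpa_accepts q0 delta col (\<lambda>n. Pair (z C (pidx i j n)) (w n))}"
        unfolding Rmem x_def by simp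
      then show ?thesis using lasso_regular[OF ij fQ q0 cl] by simp
    qed
    obtain e where e: "bij_betw e {1..card CC} CC" using ex_bij_betw_nat_finite_1[OF fCC] by blast
    then have eim: "e ` {1..card CC} = CC" by (simp add: bij_betw_def)
    show "omega_recognizable R" unfolding omega_recognizable_def
    proof (intro exI conjI ballI)
      fix k assume "k \<in> {1..card CC}"
      show "omega_regular {y. (y, x (e k)) \<in> R}" by (rule regX)
      show "omega_regular {w. (x (e k), w) \<in> R}" by (rule regY)
    next
      show "R = (\<Union>k\<in>{1..card CC}. {y. (y, x (e k)) \<in> R} \<times> {w. (x (e k), w) \<in> R})"
      proof -
        have eq1: "(\<Union>k\<in>{1..card CC}. {y. (y, x (e k)) \<in> R} \<times> {w. (x (e k), w) \<in> R}) =
          (\<Union>C\<in>CC. {y. (y, x C) \<in> R} \<times> {w. (x C, w) \<in> R})"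
          by (rule UN_reindex[OF eim])
        show ?thesis by (rule trans[OF Req eq1[symmetric]])
      qed
    qed
  qed
qed

end
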